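(* Let $\Omega,\Omega^*$ be two compact metric spaces and let $c\in C(\Omega\times\Omega^* )$. Let $\mu_1,\mu_2$ be two Borel probability measures on $\Omega$ and let $\nu$ be a Borel probability measure on $\Omega^*$. For $i=1,2$, take $\phi_i\in\Phi_c(\mu_i,\nu)$. Let $U$ be a Borel subset of $\Omega$ and suppose that $\mu_1\leq\mu_2$ on $U$ and that $\phi_1\leq\phi_2$ on $\Omega\setminus U$. Then \[ \phi_1\wedge\phi_2\in\Phi_c(\mu_1,\nu)\quad\text{and}\quad \phi_1\vee\phi_2\in\Phi_c(\mu_2,\nu). \] Additionally, $\phi_1\leq\phi_2$ on the support of $\mu_2-\mu_1$.
   Context: For $\phi\in C(\Omega)$, its $c$-transform is $\phi^c(y)=\sup_{x\in\Omega}\phi(x)-c(x,y)$, $y\in\Omega^*$ (a continuous function). For positive finite Borel measures $\mu$ on $\Omega$ and $\nu$ on $\Omega^*$, the optimal transport cost is $\mathcal T_c(\mu,\nu)=\inf_{\pi\in\Pi(\mu,\nu)}\int c\,d\pi$, where $\Pi(\mu,\nu)$ is the set of positive measures on $\Omega\times\Omega^*$ with marginals $\mu,\nu$ (and $\mathcal T_c=+\infty$ if the masses differ); by duality $\mathcal T_c(\mu,\nu)=\max_{\phi\in C(\Omega)}\int_\Omega\phi\,d\mu-\int_{\Omega^*}\phi^c\,d\nu$. The set of Kantorovich potentials is $\Phi_c(\mu,\nu)=\{\phi\in C(\Omega):\int_\Omega\phi\,d\mu-\int_{\Omega^*}\phi^c\,d\nu=\mathcal T_c(\mu,\nu)\}$.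 $\wedge,\vee$ denote pointwise minimum and maximum. "$\mu_1\leq\mu_2$ on $U$" means $\mu_1(A)\leq\mu_2(A)$ for every Borel $A\subset U$. The support of a signed measure $\sigma$ is the support of its total variation $|\sigma|$, i.e. the complement of the largest open set of $|\sigma|$-measure zero. *)

theory Defs
  imports "HOL-Analysis.Analysis" "HOL-Probability.Probability_Measure"
begin

definition c_transform :: "'a set \<Rightarrow> ('a \<Rightarrow> 'b \<Rightarrow> real) \<Rightarrow> ('a \<Rightarrow> real) \<Rightarrow> 'b \<Rightarrow> real" where
  "c_transform \<Omega> c \<phi> y = (SUP x\<in>\<Omega>. \<phi> x - c x y)"

definition transport_plans ::
  "'a::metric_space set \<Rightarrow> 'b::metric_space set \<Rightarrow> 'a measure \<Rightarrow> 'b measure \<Rightarrow> ('a \<times> 'b) measure set" where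
  "transport_plans \<Omega> \<Omega>' \<mu> \<nu> =
     {\<pi>. sets \<pi> = sets (restrict_space borel (\<Omega> \<times> \<Omega>')) \<and> finite_measure \<pi> \<and>
          distr \<pi> (restrict_space borel \<Omega>) fst = \<mu> \<and>
          distr \<pi> (restrict_space borel \<Omega>') snd = \<nu>}"

text \<open>Optimal transport cost (value +infinity when there is no plan, e.g. masses differ).\<close>
definition transport_cost ::
  "'a::metric_space set \<Rightarrow> 'b::metric_space set \<Rightarrow> ('a \<Rightarrow> 'b \<Rightarrow> real) \<Rightarrow> 'a measure \<Rightarrow> 'b measure \<Rightarrow> ereal" where
  "transport_cost \<Omega> \<Omega>' c \<mu> \<nu> =
     (INF \<pi>\<in>transport_plans \<Omega> \<Omega>' \<mu> \<nu>. ereal (integral\<^sup>L \<pi> (\<lambda>(x, y). c x y)))"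

definition kantorovich_potentials ::
  "'a::metric_space set \<Rightarrow> 'b::metric_space set \<Rightarrow> ('a \<Rightarrow> 'b \<Rightarrow> real) \<Rightarrow> 'a measure \<Rightarrow> 'b measure
     \<Rightarrow> ('a \<Rightarrow> real) set" where
  "kantorovich_potentials \<Omega> \<Omega>' c \<mu> \<nu> =
     {\<phi>. continuous_on \<Omega> \<phi> \<and>
          ereal ((\<integral>x. \<phi> x \<partial>\<mu>) - (\<integral>y. c_transform \<Omega> c \<phi> y \<partial>\<nu>)) = transport_cost \<Omega> \<Omega>' c \<mu> \<nu>}"

definition signed_diff_tv :: "'a measure \<Rightarrow> 'a measure \<Rightarrow> 'a set \<Rightarrow> ereal" where
  "signed_diff_tv \<mu>2 \<mu>1 V =
     (SUP P\<in>{P. finite P \<and> disjoint P \<and> P \<subseteq> sets \<mu>1 \<and> \<Union>P = V}.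
        ereal (\<Sum>A\<in>P. \<bar>measure \<mu>2 A - measure \<mu>1 A\<bar>))"

definition signed_diff_support :: "'a::metric_space set \<Rightarrow> 'a measure \<Rightarrow> 'a measure \<Rightarrow> 'a set" where
  "signed_diff_support \<Omega> \<mu>2 \<mu>1 =
     \<Omega> - \<Union>{V. openin (top_of_set \<Omega>) V \<and> signed_diff_tv \<mu>2 \<mu>1 V = 0}"

end

theory Submission
  imports Defs
begin


lemma ct_bdd:
  fixes \<Omega> :: "'a::metric_space set" and \<Omega>' :: "'b::metric_space set"
    and c :: "'a \<Rightarrow> 'b \<Rightarrow> real" and \<phi> :: "'a \<Rightarrow> real"
  assumes "compact \<Omega>" "compact \<Omega>'" "continuous_on (\<Omega> \<times> \<Omega>') (\<lambda>(x, y). c x y)"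
    "continuous_on \<Omega> \<phi>" "y \<in> \<Omega>'"
  shows "bdd_above ((\<lambda>x. \<phi> x - c x y) ` \<Omega>)"
proof -
  have "continuous_on \<Omega> (\<lambda>x. (\<lambda>(x, y). c x y) (x, y))"
    by (rule continuous_on_compose2[OF assms(3)]) (auto intro!: continuous_intros simp: assms(5))
  hence "continuous_on \<Omega> (\<lambda>x. c x y)" by simp
  hence "continuous_on \<Omega> (\<lambda>x. \<phi> x - c x y)"
    by (rule continuous_on_diff[OF assms(4)])
  hence "compact ((\<lambda>x. \<phi> x - c x y) ` \<Omega>)" using assms(1) compact_continuous_image by blast
  thus ?thesis by (simp add: bounded_imp_bdd_above compact_imp_bounded)
qed

lemma ct_upper:
  fixes \<Omega> :: "'a::metric_space set" and \<Omega>' :: "'b::metric_space set"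
    and c :: "'a \<Rightarrow> 'b \<Rightarrow> real" and \<phi> :: "'a \<Rightarrow> real"
  assumes "compact \<Omega>" "compact \<Omega>'" "continuous_on (\<Omega> \<times> \<Omega>') (\<lambda>(x, y). c x y)"
    "continuous_on \<Omega> \<phi>" "y \<in> \<Omega>'" "x \<in> \<Omega>"
  shows "\<phi> x - c x y \<le> c_transform \<Omega> c \<phi> y"
  unfolding c_transform_def
  by (rule cSUP_upper[OF assms(6) ct_bdd[OF assms(1-5)]])

lemma ct_least:
  assumes "\<Omega> \<noteq> {}" "\<And>x. x \<in> \<Omega> \<Longrightarrow> \<phi> x - c x y \<le> B"
  shows "c_transform \<Omega> c \<phi> y \<le> B"
  unfolding c_transform_def using assms by (intro cSUP_least) auto

lemma ct_cont:
  fixes \<Omega> :: "'a::metric_space set" and \<Omega>' :: "'b::metric_space set"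
    and c :: "'a \<Rightarrow> 'b \<Rightarrow> real" and \<phi> :: "'a \<Rightarrow> real"
  assumes "compact \<Omega>" "compact \<Omega>'" "continuous_on (\<Omega> \<times> \<Omega>') (\<lambda>(x, y). c x y)"
    "continuous_on \<Omega> \<phi>" "\<Omega> \<noteq> {}"
  shows "continuous_on \<Omega>' (c_transform \<Omega> c \<phi>)"
proof -
  have uc: "uniformly_continuous_on (\<Omega> \<times> \<Omega>') (\<lambda>(x, y). c x y)"
    using assms(3) compact_Times[OF assms(1,2)] compact_uniformly_continuous by blast
  show ?thesis unfolding continuous_on_iff
  proof (intro ballI allI impI)
    fix y e assume y: "y \<in> \<Omega>'" and e: "(0::real) < e"
    obtain d where d: "d > 0" and dd: "\<And>p p'. p \<in> \<Omega> \<times> \<Omega>' \<Longrightarrow> p' \<in> \<Omega> \<times> \<Omega>' \<Longrightarrow> dist p' p < d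
        \<Longrightarrow> dist ((\<lambda>(x, y). c x y) p') ((\<lambda>(x, y). c x y) p) < e/2"
      using uc e unfolding uniformly_continuous_on_def by (metis half_gt_zero)
    show "\<exists>d>0. \<forall>x'\<in>\<Omega>'. dist x' y < d \<longrightarrow> dist (c_transform \<Omega> c \<phi> x') (c_transform \<Omega> c \<phi> y) < e"
    proof (intro exI[of _ d] conjI ballI impI d)
      fix y' assume y': "y' \<in> \<Omega>'" and dy: "dist y' y < d"
      have cc: "\<bar>c x y' - c x y\<bar> < e/2" if "x \<in> \<Omega>" for x
        using dd[of "(x,y)" "(x,y')"] that y y' dy by (auto simp: dist_Pair_Pair dist_real_def)
      have 1: "c_transform \<Omega> c \<phi> y' \<le> c_transform \<Omega> c \<phi> y + e/2"
      proof (rule ct_least[OF assms(5)])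
        fix x assume x: "x \<in> \<Omega>"
        have "\<phi> x - c x y \<le> c_transform \<Omega> c \<phi> y" by (rule ct_upper[OF assms(1-4) y x])
        thus "\<phi> x - c x y' \<le> c_transform \<Omega> c \<phi> y + e/2" using cc[OF x] by linarith
      qed
      have 2: "c_transform \<Omega> c \<phi> y \<le> c_transform \<Omega> c \<phi> y' + e/2"
      proof (rule ct_least[OF assms(5)])
        fix x assume x: "x \<in> \<Omega>"
        have "\<phi> x - c x y' \<le> c_transform \<Omega> c \<phi> y'" by (rule ct_upper[OF assms(1-4) y' x])
        thus "\<phi> x - c x y \<le> c_transform \<Omega> c \<phi> y' + e/2" using cc[OF x] by linarith
      qed
      show "dist (c_transform \<Omega> c \<phi> y') (c_transform \<Omega> c \<phi> y) < e"
        using 1 2 e by (simp add: dist_real_def abs_le_iff)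
    qed
  qed
qed

lemma cont_integrable:
  fixes f :: "'a::metric_space \<Rightarrow> real"
  assumes "sets M = sets (restrict_space borel S)" "finite_measure M" "compact S" "continuous_on S f"
  shows "integrable M f"
proof -
  have sp: "space M = S" using sets_eq_imp_space_eq[OF assms(1)] by (simp add: space_restrict_space)
  have meas: "f \<in> borel_measurable M"
    using borel_measurable_continuous_on_restrict[OF assms(4)] measurable_cong_sets[OF assms(1) refl] by blast
  have "bounded (f ` S)" using compact_continuous_image[OF assms(4,3)] compact_imp_bounded by blast
  then obtain B where B: "\<And>x. x \<in> S \<Longrightarrow> norm (f x) \<le> B" unfolding bounded_iff by auto
  show ?thesis
    by (rule finite_measure.integrable_const_bound[OF assms(2), of _ B]) (use B sp meas in auto)
qed



lemma weak_duality:
  fixes \<Omega> :: "'a::metric_space set" and \<Omega>' :: "'b::metric_space set"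
    and c :: "'a \<Rightarrow> 'b \<Rightarrow> real" and \<phi> :: "'a \<Rightarrow> real"
  assumes "compact \<Omega>" "compact \<Omega>'" "continuous_on (\<Omega> \<times> \<Omega>') (\<lambda>(x, y). c x y)"
    "continuous_on \<Omega> \<phi>" "\<Omega> \<noteq> {}"
  shows "ereal ((\<integral>x. \<phi> x \<partial>\<mu>) - (\<integral>y. c_transform \<Omega> c \<phi> y \<partial>\<nu>)) \<le> transport_cost \<Omega> \<Omega>' c \<mu> \<nu>"
  unfolding transport_cost_def
proof (rule INF_greatest)
  fix \<pi> assume "\<pi> \<in> transport_plans \<Omega> \<Omega>' \<mu> \<nu>"
  hence sp: "sets \<pi> = sets (restrict_space borel (\<Omega> \<times> \<Omega>'))" and fm: "finite_measure \<pi>"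
    and mu: "distr \<pi> (restrict_space borel \<Omega>) fst = \<mu>" and nu: "distr \<pi> (restrict_space borel \<Omega>') snd = \<nu>"
    unfolding transport_plans_def mem_Collect_eq by blast+
  have spc: "space \<pi> = \<Omega> \<times> \<Omega>'" using sets_eq_imp_space_eq[OF sp] space_restrict_space[of borel "\<Omega> \<times> \<Omega>'"] by simp
  have cK: "compact (\<Omega> \<times> \<Omega>')" using assms(1,2) by (rule compact_Times)
  have mfst: "fst \<in> measurable \<pi> (restrict_space borel \<Omega>)"
  proof (rule measurable_restrict_space2)
    show "fst \<in> space \<pi> \<rightarrow> \<Omega>" using spc by (simp add: Pi_iff mem_Times_iff)
    have "fst \<in> borel_measurable (restrict_space borel (\<Omega> \<times> \<Omega>'))"
      by (rule borel_measurable_continuous_on_restrict) (rule continuous_on_fst[OF continuous_on_id])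
    thus "fst \<in> borel_measurable \<pi>" unfolding measurable_cong_sets[OF sp refl] .
  qed
  have msnd: "snd \<in> measurable \<pi> (restrict_space borel \<Omega>')"
  proof (rule measurable_restrict_space2)
    show "snd \<in> space \<pi> \<rightarrow> \<Omega>'" using spc by (simp add: Pi_iff mem_Times_iff)
    have "snd \<in> borel_measurable (restrict_space borel (\<Omega> \<times> \<Omega>'))"
      by (rule borel_measurable_continuous_on_restrict) (rule continuous_on_snd[OF continuous_on_id])
    thus "snd \<in> borel_measurable \<pi>" unfolding measurable_cong_sets[OF sp refl] .
  qed
  have ctc: "continuous_on \<Omega>' (c_transform \<Omega> c \<phi>)" by (rule ct_cont[OF assms])
  have i1: "(\<integral>x. \<phi> x \<partial>\<mu>) = (\<integral>z. \<phi> (fst z) \<partial>\<pi>)"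
    unfolding mu[symmetric] by (rule integral_distr[OF mfst borel_measurable_continuous_on_restrict[OF assms(4)]])
  have i2: "(\<integral>y. c_transform \<Omega> c \<phi> y \<partial>\<nu>) = (\<integral>z. c_transform \<Omega> c \<phi> (snd z) \<partial>\<pi>)"
    unfolding nu[symmetric] by (rule integral_distr[OF msnd borel_measurable_continuous_on_restrict[OF ctc]])
  have c1: "continuous_on (\<Omega> \<times> \<Omega>') (\<lambda>z. \<phi> (fst z))"
    by (rule continuous_on_compose2[OF assms(4) continuous_on_fst[OF continuous_on_id]]) auto
  have c2: "continuous_on (\<Omega> \<times> \<Omega>') (\<lambda>z. c_transform \<Omega> c \<phi> (snd z))"
    by (rule continuous_on_compose2[OF ctc continuous_on_snd[OF continuous_on_id]]) auto
  have int1: "integrable \<pi> (\<lambda>z. \<phi> (fst z))" by (rule cont_integrable[OF sp fm cK c1])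
  have int2: "integrable \<pi> (\<lambda>z. c_transform \<Omega> c \<phi> (snd z))" by (rule cont_integrable[OF sp fm cK c2])
  have int3: "integrable \<pi> (\<lambda>(x, y). c x y)" by (rule cont_integrable[OF sp fm cK assms(3)])
  have "(\<integral>x. \<phi> x \<partial>\<mu>) - (\<integral>y. c_transform \<Omega> c \<phi> y \<partial>\<nu>)
      = (\<integral>z. \<phi> (fst z) - c_transform \<Omega> c \<phi> (snd z) \<partial>\<pi>)"
    unfolding i1 i2 by (rule Bochner_Integration.integral_diff[OF int1 int2, symmetric])
  also have "\<dots> \<le> integral\<^sup>L \<pi> (\<lambda>(x, y). c x y)"
  proof (rule integral_mono[OF Bochner_Integration.integrable_diff[OF int1 int2] int3])
    fix z assume "z \<in> space \<pi>"
    then obtain x y where z: "z = (x, y)" "x \<in> \<Omega>" "y \<in> \<Omega>'" using spc by auto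
    have "\<phi> x - c x y \<le> c_transform \<Omega> c \<phi> y" by (rule ct_upper[OF assms(1-4) z(3,2)])
    thus "\<phi> (fst z) - c_transform \<Omega> c \<phi> (snd z) \<le> (case z of (x, y) \<Rightarrow> c x y)" using z by simp
  qed
  finally show "ereal ((\<integral>x. \<phi> x \<partial>\<mu>) - (\<integral>y. c_transform \<Omega> c \<phi> y \<partial>\<nu>)) \<le> ereal (integral\<^sup>L \<pi> (\<lambda>(x, y). c x y))"
    by simp
qed



lemma mono_int:
  fixes g :: "'a \<Rightarrow> real"
  assumes s1: "sets M1 = sets N" and s2: "sets M2 = sets N" and f1: "finite_measure M1" and f2: "finite_measure M2"
    and U: "U \<in> sets N" and le: "\<forall>A \<in> sets N. A \<subseteq> U \<longrightarrow> measure M1 A \<le> measure M2 A"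
    and g: "g \<in> borel_measurable N" and nn: "\<And>x. x \<in> space N \<Longrightarrow> 0 \<le> g x"
    and z: "\<And>x. x \<in> space N - U \<Longrightarrow> g x = 0" and i2: "integrable M2 g"
  shows "(\<integral>x. g x \<partial>M1) \<le> (\<integral>x. g x \<partial>M2)"
proof -
  have sp1: "space M1 = space N" and sp2: "space M2 = space N"
    using sets_eq_imp_space_eq s1 s2 by blast+
  have g1: "g \<in> borel_measurable M1" using g measurable_cong_sets[OF s1 refl] by blast
  have g2: "g \<in> borel_measurable M2" using g measurable_cong_sets[OF s2 refl] by blast
  have U1: "U \<in> sets M1" and U2: "U \<in> sets M2" using U s1 s2 by auto
  have ind1: "(\<lambda>x. indicator U x :: ennreal) \<in> borel_measurable M1" using U1 by simp
  have ind2: "(\<lambda>x. indicator U x :: ennreal) \<in> borel_measurable M2" using U2 by simp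
  have eqM: "(\<integral>\<^sup>+x. ennreal (g x) \<partial>M) = (\<integral>\<^sup>+x. ennreal (g x) \<partial>density M (indicator U))"
    if "g \<in> borel_measurable M" "U \<in> sets M" "space M = space N" for M
  proof -
    have "(\<integral>\<^sup>+x. ennreal (g x) \<partial>density M (indicator U)) = (\<integral>\<^sup>+x. indicator U x * ennreal (g x) \<partial>M)"
      using that by (intro nn_integral_density) auto
    also have "\<dots> = (\<integral>\<^sup>+x. ennreal (g x) \<partial>M)"
      using that z by (intro nn_integral_cong) (auto simp: indicator_def)
    finally show ?thesis by simp
  qed
  have dle: "density M1 (indicator U) \<le> density M2 (indicator U)"
  proof -
    have "emeasure (density M1 (indicator U)) A \<le> emeasure (density M2 (indicator U)) A" for A
    proof (cases "A \<in> sets N")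
      case True
      have ii: "(\<lambda>x. indicator U x * indicator A x :: ennreal) = indicator (A \<inter> U)"
        by (auto simp: indicator_def fun_eq_iff)
      have "emeasure (density M1 (indicator U)) A = emeasure M1 (A \<inter> U)"
        using True s1 U1 by (simp add: emeasure_density ind1 ii)
      also have "\<dots> = ennreal (measure M1 (A \<inter> U))"
        using f1 by (simp add: finite_measure.emeasure_eq_measure)
      also have "\<dots> \<le> ennreal (measure M2 (A \<inter> U))"
        using le True U by (intro ennreal_leI) auto
      also have "\<dots> = emeasure M2 (A \<inter> U)"
        using f2 by (simp add: finite_measure.emeasure_eq_measure)
      also have "\<dots> = emeasure (density M2 (indicator U)) A"
        using True s2 U2 by (simp add: emeasure_density ind2 ii)
      finally show ?thesis .
    next
      case False
      then show ?thesis using s1 by (simp add: emeasure_notin_sets)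
    qed
    thus ?thesis using s1 s2 sp1 sp2 by (simp add: le_measure_iff le_fun_def)
  qed
  have "(\<integral>\<^sup>+x. ennreal (g x) \<partial>M1) \<le> (\<integral>\<^sup>+x. ennreal (g x) \<partial>M2)"
    unfolding eqM[OF g1 U1 sp1] eqM[OF g2 U2 sp2]
    by (rule nn_integral_mono_measure[OF _ dle]) (simp add: s1 s2)
  moreover have "(\<integral>\<^sup>+x. ennreal (g x) \<partial>M2) \<noteq> \<infinity>" using integrableD(2)[OF i2] .
  ultimately have "enn2real (\<integral>\<^sup>+x. ennreal (g x) \<partial>M1) \<le> enn2real (\<integral>\<^sup>+x. ennreal (g x) \<partial>M2)"
    by (simp add: enn2real_mono top.not_eq_extremum)
  moreover have "(\<integral>x. g x \<partial>M1) = enn2real (\<integral>\<^sup>+x. ennreal (g x) \<partial>M1)"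
    using g1 nn sp1 by (intro integral_eq_nn_integral) auto
  moreover have "(\<integral>x. g x \<partial>M2) = enn2real (\<integral>\<^sup>+x. ennreal (g x) \<partial>M2)"
    using g2 nn sp2 by (intro integral_eq_nn_integral) auto
  ultimately show ?thesis by simp
qed



theorem theorem3p1:
  fixes \<Omega> :: "'a::metric_space set" and \<Omega>' :: "'b::metric_space set"
    and c :: "'a \<Rightarrow> 'b \<Rightarrow> real"
    and \<mu>1 \<mu>2 :: "'a measure" and \<nu> :: "'b measure"
    and \<phi>1 \<phi>2 :: "'a \<Rightarrow> real" and U :: "'a set"
  assumes "compact \<Omega>" and "compact \<Omega>'"
    and "continuous_on (\<Omega> \<times> \<Omega>') (\<lambda>(x, y). c x y)"
    and "sets \<mu>1 = sets (restrict_space borel \<Omega>)" and "prob_space \<mu>1"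
    and "sets \<mu>2 = sets (restrict_space borel \<Omega>)" and "prob_space \<mu>2"
    and "sets \<nu> = sets (restrict_space borel \<Omega>')" and "prob_space \<nu>"
    and "\<phi>1 \<in> kantorovich_potentials \<Omega> \<Omega>' c \<mu>1 \<nu>"
    and "\<phi>2 \<in> kantorovich_potentials \<Omega> \<Omega>' c \<mu>2 \<nu>"
    and "U \<in> sets (restrict_space borel \<Omega>)"
    and "\<forall>A \<in> sets (restrict_space borel \<Omega>). A \<subseteq> U \<longrightarrow> measure \<mu>1 A \<le> measure \<mu>2 A"
    and "\<forall>x \<in> \<Omega> - U. \<phi>1 x \<le> \<phi>2 x"
  shows "(\<lambda>x. min (\<phi>1 x) (\<phi>2 x)) \<in> kantorovich_potentials \<Omega> \<Omega>' c \<mu>1 \<nu> \<and>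
         (\<lambda>x. max (\<phi>1 x) (\<phi>2 x)) \<in> kantorovich_potentials \<Omega> \<Omega>' c \<mu>2 \<nu> \<and>
         (\<forall>x \<in> signed_diff_support \<Omega> \<mu>2 \<mu>1. \<phi>1 x \<le> \<phi>2 x)"
proof -
  note cpt = assms(1,2,3)
  define N where "N = restrict_space borel \<Omega>"
  have spN: "space N = \<Omega>" unfolding N_def by (simp add: space_restrict_space)
  have s1: "sets \<mu>1 = sets N" and s2: "sets \<mu>2 = sets N" using assms(4,6) N_def by auto
  have sp1: "space \<mu>1 = \<Omega>" and sp2: "space \<mu>2 = \<Omega>"
    using sets_eq_imp_space_eq[OF s1] sets_eq_imp_space_eq[OF s2] spN by auto
  have spnu: "space \<nu> = \<Omega>'" using sets_eq_imp_space_eq[OF assms(8)] by (simp add: space_restrict_space)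
  have ne: "\<Omega> \<noteq> {}" using prob_space.not_empty[OF assms(5)] sp1 by simp
  have fm1: "finite_measure \<mu>1" using assms(5) unfolding prob_space_def by blast
  have fm2: "finite_measure \<mu>2" using assms(7) unfolding prob_space_def by blast
  have fmnu: "finite_measure \<nu>" using assms(9) unfolding prob_space_def by blast
  let ?ct = "c_transform \<Omega> c"
  define \<psi> where "\<psi> = (\<lambda>x. min (\<phi>1 x) (\<phi>2 x))"
  define \<Psi> where "\<Psi> = (\<lambda>x. max (\<phi>1 x) (\<phi>2 x))"
  define f where "f = (\<lambda>x. max (\<phi>1 x - \<phi>2 x) 0)"
  have c1: "continuous_on \<Omega> \<phi>1" and T1: "ereal ((\<integral>x. \<phi>1 x \<partial>\<mu>1) - (\<integral>y. ?ct \<phi>1 y \<partial>\<nu>)) = transport_cost \<Omega> \<Omega>' c \<mu>1 \<nu>"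
    using assms(10) unfolding kantorovich_potentials_def by auto
  have c2: "continuous_on \<Omega> \<phi>2" and T2: "ereal ((\<integral>x. \<phi>2 x \<partial>\<mu>2) - (\<integral>y. ?ct \<phi>2 y \<partial>\<nu>)) = transport_cost \<Omega> \<Omega>' c \<mu>2 \<nu>"
    using assms(11) unfolding kantorovich_potentials_def by auto
  have cpsi: "continuous_on \<Omega> \<psi>" unfolding \<psi>_def by (rule continuous_on_min[OF c1 c2])
  have cPsi: "continuous_on \<Omega> \<Psi>" unfolding \<Psi>_def by (rule continuous_on_max[OF c1 c2])
  have cf: "continuous_on \<Omega> f" unfolding f_def
    by (intro continuous_on_max continuous_on_diff c1 c2 continuous_on_const)
  have w1: "ereal ((\<integral>x. \<psi> x \<partial>\<mu>1) - (\<integral>y. ?ct \<psi> y \<partial>\<nu>)) \<le> transport_cost \<Omega> \<Omega>' c \<mu>1 \<nu>"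
    by (rule weak_duality[OF cpt cpsi ne])
  have w2: "ereal ((\<integral>x. \<Psi> x \<partial>\<mu>2) - (\<integral>y. ?ct \<Psi> y \<partial>\<nu>)) \<le> transport_cost \<Omega> \<Omega>' c \<mu>2 \<nu>"
    by (rule weak_duality[OF cpt cPsi ne])
  have w1': "(\<integral>x. \<psi> x \<partial>\<mu>1) - (\<integral>y. ?ct \<psi> y \<partial>\<nu>) \<le> (\<integral>x. \<phi>1 x \<partial>\<mu>1) - (\<integral>y. ?ct \<phi>1 y \<partial>\<nu>)"
    using w1 T1[symmetric] by simp
  have w2': "(\<integral>x. \<Psi> x \<partial>\<mu>2) - (\<integral>y. ?ct \<Psi> y \<partial>\<nu>) \<le> (\<integral>x. \<phi>2 x \<partial>\<mu>2) - (\<integral>y. ?ct \<phi>2 y \<partial>\<nu>)"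
    using w2 T2[symmetric] by simp
  have i11: "integrable \<mu>1 \<phi>1" by (rule cont_integrable[OF assms(4) fm1 assms(1) c1])
  have i1f: "integrable \<mu>1 f" by (rule cont_integrable[OF assms(4) fm1 assms(1) cf])
  have i22: "integrable \<mu>2 \<phi>2" by (rule cont_integrable[OF assms(6) fm2 assms(1) c2])
  have i2f: "integrable \<mu>2 f" by (rule cont_integrable[OF assms(6) fm2 assms(1) cf])
  have ict: "integrable \<nu> (?ct g)" if "continuous_on \<Omega> g" for g
    by (rule cont_integrable[OF assms(8) fmnu assms(2) ct_cont[OF cpt that ne]])
  have e1: "(\<integral>x. \<psi> x \<partial>\<mu>1) = (\<integral>x. \<phi>1 x \<partial>\<mu>1) - (\<integral>x. f x \<partial>\<mu>1)"
  proof -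
    have "\<psi> = (\<lambda>x. \<phi>1 x - f x)" unfolding \<psi>_def f_def by (auto simp: fun_eq_iff)
    thus ?thesis using Bochner_Integration.integral_diff[OF i11 i1f] by simp
  qed
  have e2: "(\<integral>x. \<Psi> x \<partial>\<mu>2) = (\<integral>x. \<phi>2 x \<partial>\<mu>2) + (\<integral>x. f x \<partial>\<mu>2)"
  proof -
    have "\<Psi> = (\<lambda>x. \<phi>2 x + f x)" unfolding \<Psi>_def f_def by (auto simp: fun_eq_iff)
    thus ?thesis using Bochner_Integration.integral_add[OF i22 i2f] by simp
  qed
  have e3: "(\<integral>y. ?ct \<psi> y \<partial>\<nu>) + (\<integral>y. ?ct \<Psi> y \<partial>\<nu>) \<le> (\<integral>y. ?ct \<phi>1 y \<partial>\<nu>) + (\<integral>y. ?ct \<phi>2 y \<partial>\<nu>)"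
  proof -
    have "(\<integral>y. ?ct \<psi> y \<partial>\<nu>) + (\<integral>y. ?ct \<Psi> y \<partial>\<nu>) = (\<integral>y. ?ct \<psi> y + ?ct \<Psi> y \<partial>\<nu>)"
      by (rule Bochner_Integration.integral_add[OF ict[OF cpsi] ict[OF cPsi], symmetric])
    also have "\<dots> \<le> (\<integral>y. ?ct \<phi>1 y + ?ct \<phi>2 y \<partial>\<nu>)"
    proof (rule integral_mono[OF Bochner_Integration.integrable_add[OF ict[OF cpsi] ict[OF cPsi]]
          Bochner_Integration.integrable_add[OF ict[OF c1] ict[OF c2]]])
      fix y assume "y \<in> space \<nu>"
      hence y: "y \<in> \<Omega>'" using spnu by simp
      have a1: "?ct \<psi> y \<le> ?ct \<phi>1 y"
      proof (rule ct_least[OF ne])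
        fix x assume x: "x \<in> \<Omega>"
        show "\<psi> x - c x y \<le> ?ct \<phi>1 y" using ct_upper[OF cpt c1 y x] unfolding \<psi>_def by linarith
      qed
      have a2: "?ct \<psi> y \<le> ?ct \<phi>2 y"
      proof (rule ct_least[OF ne])
        fix x assume x: "x \<in> \<Omega>"
        show "\<psi> x - c x y \<le> ?ct \<phi>2 y" using ct_upper[OF cpt c2 y x] unfolding \<psi>_def by linarith
      qed
      have a3: "?ct \<Psi> y \<le> max (?ct \<phi>1 y) (?ct \<phi>2 y)"
      proof (rule ct_least[OF ne])
        fix x assume x: "x \<in> \<Omega>"
        show "\<Psi> x - c x y \<le> max (?ct \<phi>1 y) (?ct \<phi>2 y)"
          using ct_upper[OF cpt c1 y x] ct_upper[OF cpt c2 y x] unfolding \<Psi>_def by linarith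
      qed
      show "?ct \<psi> y + ?ct \<Psi> y \<le> ?ct \<phi>1 y + ?ct \<phi>2 y" using a1 a2 a3 by linarith
    qed
    also have "\<dots> = (\<integral>y. ?ct \<phi>1 y \<partial>\<nu>) + (\<integral>y. ?ct \<phi>2 y \<partial>\<nu>)"
      by (rule Bochner_Integration.integral_add[OF ict[OF c1] ict[OF c2]])
    finally show ?thesis .
  qed
  have fmeas: "f \<in> borel_measurable N" unfolding N_def by (rule borel_measurable_continuous_on_restrict[OF cf])
  have fnn: "\<And>x. 0 \<le> f x" unfolding f_def by simp
  have fz: "\<And>x. x \<in> space N - U \<Longrightarrow> f x = 0" using assms(14) spN unfolding f_def by auto
  have UN: "U \<in> sets N" using assms(12) N_def by simp
  have leN: "\<forall>A \<in> sets N. A \<subseteq> U \<longrightarrow> measure \<mu>1 A \<le> measure \<mu>2 A" using assms(13) N_def by simp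
  have e4: "(\<integral>x. f x \<partial>\<mu>1) \<le> (\<integral>x. f x \<partial>\<mu>2)"
    by (rule mono_int[OF s1 s2 fm1 fm2 UN leN fmeas fnn fz i2f])
  have eq1: "(\<integral>x. \<psi> x \<partial>\<mu>1) - (\<integral>y. ?ct \<psi> y \<partial>\<nu>) = (\<integral>x. \<phi>1 x \<partial>\<mu>1) - (\<integral>y. ?ct \<phi>1 y \<partial>\<nu>)"
    using w1' w2' e1 e2 e3 e4 by linarith
  have eq2: "(\<integral>x. \<Psi> x \<partial>\<mu>2) - (\<integral>y. ?ct \<Psi> y \<partial>\<nu>) = (\<integral>x. \<phi>2 x \<partial>\<mu>2) - (\<integral>y. ?ct \<phi>2 y \<partial>\<nu>)"
    using w1' w2' e1 e2 e3 e4 by linarith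
  have feq: "(\<integral>x. f x \<partial>\<mu>1) = (\<integral>x. f x \<partial>\<mu>2)"
    using w1' w2' e1 e2 e3 e4 by linarith
  have P1: "\<psi> \<in> kantorovich_potentials \<Omega> \<Omega>' c \<mu>1 \<nu>"
    unfolding kantorovich_potentials_def using cpsi eq1 T1 by simp
  have P2: "\<Psi> \<in> kantorovich_potentials \<Omega> \<Omega>' c \<mu>2 \<nu>"
    unfolding kantorovich_potentials_def using cPsi eq2 T2 by simp
  have P3: "\<phi>1 x \<le> \<phi>2 x" if x: "x \<in> signed_diff_support \<Omega> \<mu>2 \<mu>1" for x
  proof (rule ccontr)
    assume "\<not> \<phi>1 x \<le> \<phi>2 x"
    define \<delta> where "\<delta> = (\<phi>1 x - \<phi>2 x) / 2"
    have dpos: "\<delta> > 0" using \<open>\<not> \<phi>1 x \<le> \<phi>2 x\<close> unfolding \<delta>_def by simp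
    define g where "g = (\<lambda>y. \<phi>1 y - \<phi>2 y)"
    define V where "V = \<Omega> \<inter> g -` {\<delta><..}"
    have cg: "continuous_on \<Omega> g" unfolding g_def by (rule continuous_on_diff[OF c1 c2])
    have Vo: "openin (top_of_set \<Omega>) V" unfolding V_def
      by (rule continuous_openin_preimage_gen[OF cg]) simp
    have xO: "x \<in> \<Omega>" using x unfolding signed_diff_support_def by simp
    have xV: "x \<in> V" unfolding V_def g_def \<delta>_def using xO dpos \<delta>_def by simp
    have VU: "V \<subseteq> U" using assms(14) unfolding V_def g_def using dpos by force
    have VN: "V \<in> sets N"
    proof -
      have "g \<in> borel_measurable N" unfolding N_def by (rule borel_measurable_continuous_on_restrict[OF cg])
      hence "g -` {\<delta><..} \<inter> space N \<in> sets N" by (rule measurable_sets) simp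
      thus ?thesis unfolding V_def spN by (simp add: Int_commute)
    qed
    have mpos: "measure \<mu>2 V - measure \<mu>1 V > 0"
    proof (rule ccontr)
      assume nle: "\<not> measure \<mu>2 V - measure \<mu>1 V > 0"
      define S where "S = {P. finite P \<and> disjoint P \<and> P \<subseteq> sets \<mu>1 \<and> \<Union>P = V}"
      have zero: "(\<Sum>A\<in>P. \<bar>measure \<mu>2 A - measure \<mu>1 A\<bar>) = 0" if P: "P \<in> S" for P
      proof -
        have PS: "finite P" "disjoint P" "P \<subseteq> sets N" "\<Union>P = V" using P s1 unfolding S_def by auto
        have AU: "\<And>A. A \<in> P \<Longrightarrow> A \<subseteq> U" using PS(4) VU by blast
        have ab: "\<And>A. A \<in> P \<Longrightarrow> \<bar>measure \<mu>2 A - measure \<mu>1 A\<bar> = measure \<mu>2 A - measure \<mu>1 A"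
          using leN AU PS(3) by force
        have fms1: "\<And>A. A \<in> P \<Longrightarrow> A \<in> fmeasurable \<mu>1"
          using PS(3) s1 finite_measure.fmeasurable_eq_sets[OF fm1] by auto
        have fms2: "\<And>A. A \<in> P \<Longrightarrow> A \<in> fmeasurable \<mu>2"
          using PS(3) s2 finite_measure.fmeasurable_eq_sets[OF fm2] by auto
        have "(\<Sum>A\<in>P. \<bar>measure \<mu>2 A - measure \<mu>1 A\<bar>) = (\<Sum>A\<in>P. measure \<mu>2 A) - (\<Sum>A\<in>P. measure \<mu>1 A)"
          using ab by (simp add: sum_subtractf)
        also have "\<dots> = measure \<mu>2 V - measure \<mu>1 V"
          using measure_Union'[OF PS(1) fms1 PS(2)] measure_Union'[OF PS(1) fms2 PS(2)] PS(4) by simp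
        finally have eqs: "(\<Sum>A\<in>P. \<bar>measure \<mu>2 A - measure \<mu>1 A\<bar>) = measure \<mu>2 V - measure \<mu>1 V" .
        have "(\<Sum>A\<in>P. \<bar>measure \<mu>2 A - measure \<mu>1 A\<bar>) \<ge> 0" by (rule sum_nonneg) simp
        thus ?thesis using eqs nle by linarith
      qed
      have VS: "{V} \<in> S" unfolding S_def using VN s1 by auto
      have "signed_diff_tv \<mu>2 \<mu>1 V = (SUP P\<in>S. ereal 0)"
        unfolding signed_diff_tv_def S_def[symmetric] by (rule SUP_cong) (simp_all add: zero)
      also have "\<dots> = 0" using VS by (metis SUP_const empty_iff zero_ereal_def)
      finally have "signed_diff_tv \<mu>2 \<mu>1 V = 0" .
      hence "V \<subseteq> \<Union>{V. openin (top_of_set \<Omega>) V \<and> signed_diff_tv \<mu>2 \<mu>1 V = 0}" using Vo by blast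
      thus False using x xV unfolding signed_diff_support_def by blast
    qed
    define h where "h = (\<lambda>y. f y - \<delta> * indicator V y)"
    have hmeas: "h \<in> borel_measurable N" unfolding h_def using fmeas VN by measurable
    have hnn: "0 \<le> h y" if "y \<in> space N" for y
    proof (cases "y \<in> V")
      case True
      hence "g y > \<delta>" unfolding V_def by simp
      thus ?thesis unfolding h_def f_def g_def using True by simp
    next
      case False
      thus ?thesis unfolding h_def using fnn by simp
    qed
    have hz: "h y = 0" if "y \<in> space N - U" for y
      using that fz VU unfolding h_def by (auto simp: indicator_def)
    have V1: "V \<in> sets \<mu>1" and V2: "V \<in> sets \<mu>2" using VN s1 s2 by auto
    have iV1: "integrable \<mu>1 (indicator V :: 'a \<Rightarrow> real)"
      using V1 finite_measure.emeasure_finite[OF fm1, of V] by (simp add: top.not_eq_extremum)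
    have iV2: "integrable \<mu>2 (indicator V :: 'a \<Rightarrow> real)"
      using V2 finite_measure.emeasure_finite[OF fm2, of V] by (simp add: top.not_eq_extremum)
    have VO: "V \<subseteq> \<Omega>" unfolding V_def by auto
    have ih2: "integrable \<mu>2 h" unfolding h_def using i2f iV2 by auto
    have "(\<integral>y. h y \<partial>\<mu>1) \<le> (\<integral>y. h y \<partial>\<mu>2)"
      by (rule mono_int[OF s1 s2 fm1 fm2 UN leN hmeas hnn hz ih2])
    moreover have "(\<integral>y. h y \<partial>\<mu>1) = (\<integral>x. f x \<partial>\<mu>1) - \<delta> * measure \<mu>1 V"
      unfolding h_def using i1f iV1 V1 sp1 by (simp add: Int_absorb2[OF VO])
    moreover have "(\<integral>y. h y \<partial>\<mu>2) = (\<integral>x. f x \<partial>\<mu>2) - \<delta> * measure \<mu>2 V"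
      unfolding h_def using i2f iV2 V2 sp2 by (simp add: Int_absorb2[OF VO])
    moreover have "\<delta> * (measure \<mu>2 V - measure \<mu>1 V) > 0" using dpos mpos by simp
    ultimately show False using feq by (simp add: algebra_simps)
  qed
  show ?thesis using P1 P2 P3 unfolding \<psi>_def \<Psi>_def by blast
qed

end
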